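(* Consider the ship dynamics $$M\dot\nu(t) + D(\nu(t))\nu(t) + C(\nu(t))\nu(t) = \tau(t) + \tau_d(t), \qquad \nu=[u,v,r]^\top\in\mathbb{R}^3,$$ with $M$, $D$, $C$, $\kappa_{ij}$, $\sigma$, $\Gamma_1,\Gamma_2,\Gamma_3$ and $T$ as described in the context, and assume $\kappa_{23}\kappa_{32}<\kappa_{22}\kappa_{33}$ (so $\sigma>0$) and $\Gamma_1,\Gamma_2,\Gamma_3>0$. Run the disturbance observer $$\hat\tau_d(t) = \zeta(t) + T\nu(t),\qquad \dot\zeta(t) = -T M^{-1}\big(\tau(t) + \hat\tau_d(t) - D(\nu(t))\nu(t) - C(\nu(t))\nu(t)\big),$$ from an arbitrary initial value $\zeta(0)\in\mathbb{R}^3$, along a solution $(\nu,\zeta)$ defined for $t\ge 0$. If the disturbance $\tau_d$ is constant, then the estimation error $z(t)=\tau_d-\hat\tau_d(t)$ satisfies $$\dot z(t) = -\sigma\,\mathrm{diag}(\Gamma_1,\Gamma_2,\Gamma_3)\, z(t),$$ i.e. $z_i(t)=e^{-\sigma\Gamma_i t}z_i(0)$ for $i=1,2,3$; in particular the error dynamics are globally exponentially stable and $z(t)\to 0$ exponentially, with all three components converging at the common rate $\sigma\Gamma$ when $\Gamma_1=\Gamma_2=\Gamma_3=\Gamma$.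
   Context: $\nu=[u,v,r]^\top$ are the surge, sway and yaw-rate velocities of the ship, $\tau(t)\in\mathbb{R}^3$ is the control input and $\tau_d(t)\in\mathbb{R}^3$ the environmental disturbance (wind, waves, currents). The mass matrix is constant, symmetric, positive definite, of the form $M=\begin{bmatrix} m_{11}&0&0\\0&m_{22}&m_{23}\\0&m_{32}&m_{33}\end{bmatrix}$ with positive entries, and its inverse is written $M^{-1}=\begin{bmatrix} \kappa_{11}&0&0\\0&\kappa_{22}&\kappa_{23}\\0&\kappa_{32}&\kappa_{33}\end{bmatrix}$. $D(\nu)$ is the nonlinear damping matrix $\begin{bmatrix} d_{11}&0&0\\0&d_{22}&d_{23}\\0&d_{32}&d_{33}\end{bmatrix}$ with $d_{11}=-X_u-X_{|u|u}-X_{uuu}u^2$, $d_{22}=-Y_v-Y_{|v|v}-Y_{|r|v}|r|-Y_{vvv}v^2$, $d_{23}=-Y_r-Y_{|v|r}|v|-Y_{|r|r}|r|$, $d_{32}=-N_v-N_{|v|v}|v|-N_{|r|v}|r|$, $d_{33}=-N_r-N_{|v|r}|v|-N_{|r|r}|r|-N_{rrr}r^2$ (real hydrodynamic constants), and $C(\nu)=\begin{bmatrix}0&0&c_{13}\\0&0&c_{23}\\-c_{13}&-c_{23}&0\end{bmatrix}$ with $c_{13}=-m_{22}v-m_{23}r$, $c_{23}=m_{11}u$. Define $\sigma = 1-\frac{\kappa_{23}\kappa_{32}}{\kappa_{22}\kappa_{33}}$, adaptive gains $\Gamma_1,\Gamma_2,\Gamma_3\in\mathbb{R}$, and $$T=\begin{bmatrix}\Gamma_1\frac{\sigma}{\kappa_{11}}&0&0\\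 0&\frac{\Gamma_2}{\kappa_{22}}&-\Gamma_2\frac{\kappa_{23}}{\kappa_{22}\kappa_{33}}\\ 0&-\Gamma_3\frac{\kappa_{32}}{\kappa_{22}\kappa_{33}}&\frac{\Gamma_3}{\kappa_{33}}\end{bmatrix}.$$ *)

theory Defs
  imports "HOL-Analysis.Analysis"
begin

definition mat3 :: "real \<Rightarrow> real \<Rightarrow> real \<Rightarrow> real \<Rightarrow> real \<Rightarrow> real \<Rightarrow> real \<Rightarrow> real \<Rightarrow> real
    \<Rightarrow> real^3^3" where
  "mat3 a11 a12 a13 a21 a22 a23 a31 a32 a33 =
     (\<chi> i j. if i = 1 then (if j = 1 then a11 else if j = 2 then a12 else a13)
             else if i = 2 then (if j = 1 then a21 else if j = 2 then a22 else a23)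
             else (if j = 1 then a31 else if j = 2 then a32 else a33))"

definition massM :: "real \<Rightarrow> real \<Rightarrow> real \<Rightarrow> real \<Rightarrow> real \<Rightarrow> real^3^3" where
  "massM m11 m22 m23 m32 m33 = mat3 m11 0 0  0 m22 m23  0 m32 m33"

definition kap :: "real^3^3 \<Rightarrow> 3 \<Rightarrow> 3 \<Rightarrow> real" where
  "kap M i j = matrix_inv M $ i $ j"

record hydro =
  X_u :: real  X_absu_u :: real  X_uuu :: real
  Y_v :: real  Y_absv_v :: real  Y_absr_v :: real  Y_vvv :: real
  Y_r :: real  Y_absv_r :: real  Y_absr_r :: real
  N_v :: real  N_absv_v :: real  N_absr_v :: real
  N_r :: real  N_absv_r :: real  N_absr_r :: real  N_rrr :: real

definition dampD :: "hydro \<Rightarrow> real^3 \<Rightarrow> real^3^3" where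
  "dampD h nu = (let u = nu $ 1; v = nu $ 2; r = nu $ 3 in
     mat3 (- X_u h - X_absu_u h - X_uuu h * u\<^sup>2) 0 0
          0 (- Y_v h - Y_absv_v h - Y_absr_v h * \<bar>r\<bar> - Y_vvv h * v\<^sup>2)
            (- Y_r h - Y_absv_r h * \<bar>v\<bar> - Y_absr_r h * \<bar>r\<bar>)
          0 (- N_v h - N_absv_v h * \<bar>v\<bar> - N_absr_v h * \<bar>r\<bar>)
            (- N_r h - N_absv_r h * \<bar>v\<bar> - N_absr_r h * \<bar>r\<bar> - N_rrr h * r\<^sup>2))"

definition corC :: "real \<Rightarrow> real \<Rightarrow> real \<Rightarrow> real^3 \<Rightarrow> real^3^3" where
  "corC m11 m22 m23 nu = (let u = nu $ 1; v = nu $ 2; r = nu $ 3;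
       c13 = - m22 * v - m23 * r; c23 = m11 * u in
     mat3 0 0 c13  0 0 c23  (- c13) (- c23) 0)"

definition sigmaK :: "real^3^3 \<Rightarrow> real" where
  "sigmaK M = 1 - kap M 2 3 * kap M 3 2 / (kap M 2 2 * kap M 3 3)"

definition gainT :: "real^3^3 \<Rightarrow> real \<Rightarrow> real \<Rightarrow> real \<Rightarrow> real^3^3" where
  "gainT M g1 g2 g3 =
     mat3 (g1 * sigmaK M / kap M 1 1) 0 0
          0 (g2 / kap M 2 2) (- g2 * kap M 2 3 / (kap M 2 2 * kap M 3 3))
          0 (- g3 * kap M 3 2 / (kap M 2 2 * kap M 3 3)) (g3 / kap M 3 3)"

definition diag3 :: "real \<Rightarrow> real \<Rightarrow> real \<Rightarrow> real^3^3" where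
  "diag3 a b c = mat3 a 0 0  0 b 0  0 0 c"

definition gam :: "real \<Rightarrow> real \<Rightarrow> real \<Rightarrow> 3 \<Rightarrow> real" where
  "gam g1 g2 g3 i = (if i = 1 then g1 else if i = 2 then g2 else g3)"

end

theory Submission imports Defs "HOL-Real_Asymp.Real_Asymp" begin

lemma inv_massM:
  fixes m11 m22 m23 m32 m33 :: real
  assumes "m11 \<noteq> 0" "m22*m33 - m23*m32 \<noteq> 0"
  shows "matrix_inv (massM m11 m22 m23 m32 m33) =
    mat3 (1/m11) 0 0 0 (m33/(m22*m33 - m23*m32)) (-m23/(m22*m33 - m23*m32))
         0 (-m32/(m22*m33 - m23*m32)) (m22/(m22*m33 - m23*m32))" (is "matrix_inv ?M = ?K")
proof -
  have 1: "?M ** ?K = mat 1" using assms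
    by (simp add: vec_eq_iff forall_3 matrix_matrix_mult_def sum_3 mat3_def massM_def mat_def diff_divide_distrib[symmetric] add_divide_distrib[symmetric] mult.commute)
  have 2: "?K ** ?M = mat 1" using assms
    by (simp add: vec_eq_iff forall_3 matrix_matrix_mult_def sum_3 mat3_def massM_def mat_def diff_divide_distrib[symmetric] add_divide_distrib[symmetric] mult.commute)
  have "?M ** matrix_inv ?M = mat 1 \<and> matrix_inv ?M ** ?M = mat 1"
    unfolding matrix_inv_def by (rule someI[of _ ?K]) (use 1 2 in simp)
  then have "matrix_inv ?M = matrix_inv ?M ** (?M ** ?K)" using 1 by (simp add: matrix_mul_rid)
  also have "\<dots> = ?K" using \<open>?M ** matrix_inv ?M = mat 1 \<and> matrix_inv ?M ** ?M = mat 1\<close>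
    by (simp add: matrix_mul_assoc matrix_mul_lid)
  finally show ?thesis .
qed

theorem mainTheorem1:
  fixes m11 m22 m23 m32 m33 g1 g2 g3 :: real
    and h :: hydro
    and \<nu> \<nu>' \<zeta> \<tau> :: "real \<Rightarrow> real^3"
    and \<tau>d :: "real^3"
  defines "M \<equiv> massM m11 m22 m23 m32 m33"
  defines "T \<equiv> gainT M g1 g2 g3"
  defines "\<sigma> \<equiv> sigmaK M"
  defines "\<tau>hat \<equiv> (\<lambda>t. \<zeta> t + T *v \<nu> t)"
  defines "z \<equiv> (\<lambda>t. \<tau>d - \<tau>hat t)"
  assumes pos: "m11 > 0" "m22 > 0" "m23 > 0" "m32 > 0" "m33 > 0"
    and sym: "m23 = m32"
    and posdef: "\<And>x::real^3. x \<noteq> 0 \<Longrightarrow> x \<bullet> (M *v x) > 0"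
    and kcond: "kap M 2 3 * kap M 3 2 < kap M 2 2 * kap M 3 3"
    and gpos: "g1 > 0" "g2 > 0" "g3 > 0"
    and nu_deriv: "\<And>t. t \<ge> 0 \<Longrightarrow> (\<nu> has_vector_derivative \<nu>' t) (at t within {0..})"
    and ship: "\<And>t. t \<ge> 0 \<Longrightarrow>
        M *v \<nu>' t + dampD h (\<nu> t) *v \<nu> t + corC m11 m22 m23 (\<nu> t) *v \<nu> t = \<tau> t + \<tau>d"
    and observer: "\<And>t. t \<ge> 0 \<Longrightarrow>
        (\<zeta> has_vector_derivative
           (- (T *v (matrix_inv M *v (\<tau> t + \<tau>hat t - dampD h (\<nu> t) *v \<nu> t
                                        - corC m11 m22 m23 (\<nu> t) *v \<nu> t)))))
        (at t within {0..})"
  shows "(\<forall>t\<ge>0. (z has_vector_derivative (- (\<sigma> *\<^sub>R (diag3 g1 g2 g3 *v z t)))) (at t within {0..}))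
       \<and> (\<forall>t\<ge>0. \<forall>i. z t $ i = exp (- \<sigma> * gam g1 g2 g3 i * t) * z 0 $ i)
       \<and> (z \<longlongrightarrow> 0) at_top"
proof -
  define d where "d = m22*m33 - m23*m32"
  have dpos: "d > 0"
  proof -
    define x :: "real^3" where "x = (\<chi> i. if i = 1 then 0 else if i = 2 then m23 else - m22)"
    have "x \<noteq> 0" using pos unfolding x_def by (auto simp: vec_eq_iff)
    then have "x \<bullet> (M *v x) > 0" by (rule posdef)
    then have "m22 * d > 0" using sym
      by (simp add: x_def M_def massM_def mat3_def inner_vec_def sum_3 matrix_vector_mult_def d_def algebra_simps power2_eq_square)
    then show ?thesis using pos by (simp add: zero_less_mult_iff)
  qed
  define K where "K = mat3 (1/m11) 0 0 0 (m33/d) (-m23/d) 0 (-m32/d) (m22/d)"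
  have Kinv: "matrix_inv M = K"
    unfolding M_def K_def d_def by (rule inv_massM) (use pos dpos d_def in auto)
  have k: "kap M 1 1 = 1/m11" "kap M 2 2 = m33/d" "kap M 2 3 = -m23/d" "kap M 3 2 = -m32/d" "kap M 3 3 = m22/d"
    by (simp_all add: kap_def Kinv K_def mat3_def)
  have sig2: "\<sigma> = 1 - m23*m32/(m22*m33)"
    using pos dpos unfolding \<sigma>_def sigmaK_def k by (simp add: field_simps)
  have sig: "\<sigma> = d / (m22*m33)"
    using pos by (simp add: sig2 d_def field_simps)
  have sigpos: "\<sigma> > 0" using pos dpos by (simp add: sig)
  have TK: "T ** K = \<sigma> *\<^sub>R diag3 g1 g2 g3"
    using pos dpos unfolding T_def gainT_def k K_def diag3_def \<sigma>_def[symmetric]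
    by (simp add: vec_eq_iff forall_3 matrix_matrix_mult_def sum_3 mat3_def field_simps sig2)
  have KM: "K ** M = mat 1"
    using pos dpos unfolding K_def M_def massM_def
    by (simp add: vec_eq_iff forall_3 matrix_matrix_mult_def sum_3 mat3_def mat_def diff_divide_distrib[symmetric] add_divide_distrib[symmetric] mult.commute d_def)
  have diagz: "(diag3 g1 g2 g3 *v x) $ i = gam g1 g2 g3 i * x $ i" for x :: "real^3" and i
    using exhaust_3[of i] by (auto simp add: diag3_def mat3_def matrix_vector_mult_def sum_3 gam_def)
  have zder: "(z has_vector_derivative (- (\<sigma> *\<^sub>R (diag3 g1 g2 g3 *v z t)))) (at t within {0..})"
    if t: "t \<ge> 0" for t
  proof -
    let ?X = "\<tau> t - dampD h (\<nu> t) *v \<nu> t - corC m11 m22 m23 (\<nu> t) *v \<nu> t"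
    have "M *v \<nu>' t = ?X + \<tau>d" using ship[OF t] by (simp add: algebra_simps)
    then have "K *v (M *v \<nu>' t) = K *v (?X + \<tau>d)" by simp
    then have nu': "\<nu>' t = K *v (?X + \<tau>d)" by (simp add: matrix_vector_mul_assoc KM)
    have obs: "(\<zeta> has_vector_derivative (- (T *v (K *v (?X + \<tau>hat t))))) (at t within {0..})"
      using observer[OF t] unfolding Kinv by (simp add: algebra_simps)
    have d1: "((\<lambda>s. T *v \<nu> s) has_vector_derivative T *v \<nu>' t) (at t within {0..})"
      by (rule bounded_linear.has_vector_derivative[OF matrix_vector_mul_bounded_linear nu_deriv[OF t]])
    have "((\<lambda>s. \<tau>d - (\<zeta> s + T *v \<nu> s)) has_vector_derivative (0 - (- (T *v (K *v (?X + \<tau>hat t))) + T *v \<nu>' t))) (at t within {0..})"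
      by (rule has_vector_derivative_diff[OF has_vector_derivative_const has_vector_derivative_add[OF obs d1]])
    then have "(z has_vector_derivative (- (- (T *v (K *v (?X + \<tau>hat t)))) - T *v \<nu>' t)) (at t within {0..})"
      unfolding z_def \<tau>hat_def by (simp add: algebra_simps)
    moreover have "- (- (T *v (K *v (?X + \<tau>hat t)))) - T *v \<nu>' t = - (\<sigma> *\<^sub>R (diag3 g1 g2 g3 *v z t))"
    proof -
      have "- (- (T *v (K *v (?X + \<tau>hat t)))) - T *v \<nu>' t = (T ** K) *v ((?X + \<tau>hat t) - (?X + \<tau>d))"
        by (simp add: nu' matrix_vector_mul_assoc matrix_vector_mult_diff_distrib vec.add)
      also have "\<dots> = - ((T ** K) *v z t)"
        by (simp add: z_def matrix_vector_mult_diff_distrib[symmetric] vec.neg[symmetric])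
      also have "\<dots> = - (\<sigma> *\<^sub>R (diag3 g1 g2 g3 *v z t))"
        by (simp add: TK scaleR_matrix_vector_assoc)
      finally show ?thesis .
    qed
    ultimately show ?thesis by simp
  qed
  have comp: "z t $ i = exp (- \<sigma> * gam g1 g2 g3 i * t) * z 0 $ i" if t: "t \<ge> 0" for t i
  proof -
    let ?c = "\<sigma> * gam g1 g2 g3 i"
    define w where "w = (\<lambda>s. exp (?c * s) * z s $ i)"
    have "(w has_vector_derivative 0) (at s within {0..})" if s: "s \<in> {0..}" for s
    proof -
      have zi: "((\<lambda>s. z s $ i) has_real_derivative (- ?c * z s $ i)) (at s within {0..})"
      proof -
        have "((\<lambda>s. z s $ i) has_vector_derivative (- (\<sigma> *\<^sub>R (diag3 g1 g2 g3 *v z s))) $ i) (at s within {0..})"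
          by (rule bounded_linear.has_vector_derivative[OF bounded_linear_vec_nth zder]) (use s in auto)
        then show ?thesis by (simp add: has_real_derivative_iff_has_vector_derivative diagz mult.assoc)
      qed
      have e: "((\<lambda>s. exp (?c * s)) has_real_derivative exp (?c * s) * ?c) (at s within {0..})"
        by (auto intro!: derivative_eq_intros)
      have "(w has_real_derivative 0) (at s within {0..})"
        unfolding w_def by (rule DERIV_cong[OF DERIV_mult[OF e zi]]) (simp add: algebra_simps)
      then show ?thesis by (simp add: has_real_derivative_iff_has_vector_derivative algebra_simps)
    qed
    then obtain c where c: "\<And>s. s \<in> {0..} \<Longrightarrow> w s = c"
      using has_vector_derivative_zero_constant[of "{0..}" w] by (metis convex_real_interval(1))
    have "w t = w 0" using c t by simp
    then have "exp (?c * t) * z t $ i = z 0 $ i" by (simp add: w_def)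
    then have "z t $ i = exp (- ?c * t) * z 0 $ i"
      by (metis (no_types, lifting) exp_minus_inverse mult.assoc mult.commute mult_1 mult_minus_left)
    then show ?thesis by simp
  qed
  have lim: "(z \<longlongrightarrow> 0) at_top"
  proof (rule vec_tendstoI)
    fix i
    have gp: "gam g1 g2 g3 i > 0" using gpos by (simp add: gam_def)
    have "((\<lambda>t. exp (- \<sigma> * gam g1 g2 g3 i * t) * z 0 $ i) \<longlongrightarrow> 0) at_top"
    proof -
      have "((\<lambda>t. exp (- (\<sigma> * gam g1 g2 g3 i) * t)) \<longlongrightarrow> 0) at_top"
        using sigpos gp by real_asymp
      then show ?thesis using tendsto_mult_left_zero by fastforce
    qed
    moreover have "eventually (\<lambda>t. exp (- \<sigma> * gam g1 g2 g3 i * t) * z 0 $ i = z t $ i) at_top"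
      using eventually_ge_at_top[of "0::real"] by eventually_elim (rule comp[symmetric])
    ultimately show "((\<lambda>t. z t $ i) \<longlongrightarrow> 0 $ i) at_top"
      unfolding zero_index by (rule Lim_transform_eventually)
  qed
  show ?thesis using zder comp lim by blast
qed

end
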